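(* Let $(A,\circ)$ be a Novikov algebra, $\{a,b\}=a\circ b+b\circ a$, $[a,b]=a\circ b-b\circ a$, and $(a,b,c)^+=\{a,\{b,c\}\}-\{\{a,b\},c\}$. Then for all $a,b,c,d\in A$, $$\{(a,b,c)^+,d\}-\{(a,d,c)^+,b\}=\{[c,a],[b,d]\}.$$
   Context: A (right) Novikov algebra is an algebra $(A,\circ)$ satisfying $a\circ(b\circ c)-(a\circ b)\circ c=a\circ(c\circ b)-(a\circ c)\circ b$ and $a\circ(b\circ c)=b\circ(a\circ c)$ for all $a,b,c$. *)

theory Defs
  imports Main
begin

definition novikov :: "('a::ab_group_add \<Rightarrow> 'a \<Rightarrow> 'a) \<Rightarrow> bool" where
  "novikov m \<longleftrightarrow>
     (\<forall>a b c. m (a + b) c = m a c + m b c) \<and>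
     (\<forall>a b c. m a (b + c) = m a b + m a c) \<and>
     (\<forall>a b c. m a (m b c) - m (m a b) c = m a (m c b) - m (m a c) b) \<and>
     (\<forall>a b c. m a (m b c) = m b (m a c))"

definition anticomm :: "('a::ab_group_add \<Rightarrow> 'a \<Rightarrow> 'a) \<Rightarrow> 'a \<Rightarrow> 'a \<Rightarrow> 'a" where
  "anticomm m a b = m a b + m b a"

definition comm :: "('a::ab_group_add \<Rightarrow> 'a \<Rightarrow> 'a) \<Rightarrow> 'a \<Rightarrow> 'a \<Rightarrow> 'a" where
  "comm m a b = m a b - m b a"

definition assoc_plus :: "('a::ab_group_add \<Rightarrow> 'a \<Rightarrow> 'a) \<Rightarrow> 'a \<Rightarrow> 'a \<Rightarrow> 'a \<Rightarrow> 'a" where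
  "assoc_plus m a b c = anticomm m a (anticomm m b c) - anticomm m (anticomm m a b) c"

end

theory Submission
  imports Defs
begin

theorem mainTheorem10:
  fixes m :: "'a::ab_group_add \<Rightarrow> 'a \<Rightarrow> 'a"
  assumes "novikov m"
  shows "anticomm m (assoc_plus m a b c) d - anticomm m (assoc_plus m a d c) b
         = anticomm m (comm m c a) (comm m b d)"
proof -
  have la: "\<And>x y z. m (x + y) z = m x z + m y z" and ra: "\<And>x y z. m x (y + z) = m x y + m x z"
    and Lq: "\<And>x y z. m x (m y z) - m (m x y) z = m x (m z y) - m (m x z) y"
    and Rq: "\<And>x y z. m x (m y z) = m y (m x z)"
    using assms unfolding novikov_def by blast+
  have l0: "\<And>z. m 0 z = 0" using la[of 0 0] by simp
  have r0: "\<And>z. m z 0 = 0" using ra[of _ 0 0] by simp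
  have ln: "\<And>x z. m (- x) z = - m x z" using la l0 by (metis add.right_inverse add_eq_0_iff)
  have rn: "\<And>x z. m z (- x) = - m z x" using ra r0 by (metis add.right_inverse add_eq_0_iff)
  have ls: "\<And>x y z. m (x - y) z = m x z - m y z" by (metis la ln diff_conv_add_uminus)
  have rs: "\<And>x y z. m x (y - z) = m x y - m x z" by (metis ra rn diff_conv_add_uminus)
  have L0: "m x (m y z) - m (m x y) z - m x (m z y) + m (m x z) y = 0" for x y z
    using Lq[of x y z] by (simp add: algebra_simps)
  have R0: "\<And>x y z. m x (m y z) - m y (m x z) = 0" using Rq by simp
  have LL: "\<And>w x y z. m w (m x (m y z) - m (m x y) z - m x (m z y) + m (m x z) y) = 0"
    using L0 r0 by simp
  have LR: "\<And>w x y z. m (m x (m y z) - m (m x y) z - m x (m z y) + m (m x z) y) w = 0"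
    using L0 l0 by simp
  have RL: "\<And>w x y z. m w (m x (m y z) - m y (m x z)) = 0"
    using R0 r0 by simp
  have RR: "\<And>w x y z. m (m x (m y z) - m y (m x z)) w = 0"
    using R0 l0 by simp
  have "anticomm m (assoc_plus m a b c) d - anticomm m (assoc_plus m a d c) b
         - anticomm m (comm m c a) (comm m b d) = (m c (m (m a b) d) - m (m c (m a b)) d - m c (m d (m a b)) + m (m c d) (m a b)) - (m a (m b (m c d) - m (m b c) d - m b (m d c) + m (m b d) c)) - (m (m b (m c d) - m (m b c) d - m b (m d c) + m (m b d) c) a) + (m (m a b) (m c d) - m c (m (m a b) d)) + (m c (m d (m a b)) - m d (m c (m a b))) - (m a (m b (m d c) - m d (m b c))) - (m (m b (m d c) - m d (m b c)) a) + (m (m a c) (m b d) - m (m (m a c) b) d - m (m a c) (m d b) + m (m (m a c) d) b) - (m a (m c (m b d) - m (m c b) d - m c (m d b) + m (m c d) b)) - (m (m c (m b d) - m (m c b) d - m c (m d b) + m (m c d) b) a) - (m (m a c) (m b d) - m b (m (m a c) d)) + (m b (m d (m a c)) - m d (m b (m a c))) - (m d (m (m a c) b) - m (m d (m a c)) b - m d (m b (m a c)) + m (m d b) (m a c)) - (m a (m c (m d b) - m d (m c b))) - (m (m c (m d b) - m d (m c b)) a) - (m b (m c (m a d)) - m c (m b (m a d))) - (m b (m c (m a d)) - m c (m b (m a d))) + (m c (m (m a d) b) - m (m c (m a d)) b - m c (m b (m a d)) + m (m c b) (m a d)) + (m c (m (m a d) b) - m (m c (m a d)) b - m c (m b (m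 a d)) + m (m c b) (m a d)) + (m (m a d) (m c b) - m c (m (m a d) b)) + (m (m a d) (m c b) - m c (m (m a d) b)) + (m (m b a) (m c d) - m (m (m b a) c) d - m (m b a) (m d c) + m (m (m b a) d) c) + (m c (m (m b a) d) - m (m c (m b a)) d - m c (m d (m b a)) + m (m c d) (m b a)) + (m b (m a (m c d) - m (m a c) d - m a (m d c) + m (m a d) c)) + (m (m a (m c d) - m (m a c) d - m a (m d c) + m (m a d) c) b) + (m c (m d (m b a)) - m d (m c (m b a))) - (m b (m a (m c d) - m c (m a d))) - (m b (m a (m c d) - m c (m a d))) - (m b (m a (m c d) - m c (m a d))) - (m (m a (m c d) - m c (m a d)) b) - (m (m a (m c d) - m c (m a d)) b) - (m (m a (m c d) - m c (m a d)) b) + (m (m b a) (m d c) - m d (m (m b a) c)) - (m (m b c) (m a d) - m (m (m b c) a) d - m (m b c) (m d a) + m (m (m b c) d) a) + (m (m b c) (m a d) - m a (m (m b c) d)) - (m a (m d (m b c)) - m d (m a (m b c))) + (m d (m (m b c) a) - m (m d (m b c)) a - m d (m a (m b c)) + m (m d a) (m b c)) + (m (m b d) (m a c) - m (m (m b d) a) c - m (m b d) (m c a) + m (m (m b d) c) a) + (m a (m (m b d) c) - m (m a (m b d)) c - m a (m c (m b d)) + m (m a c) (m b d)) - (m b (m d (m a c) - m (m d a) c - m d (m c a) + m (m d c) a)) - (m (m d (m a c) - m (m d a) c - m d (m c a) + m (m d c) a) b) + (m a (m c (m b d)) - m c (m a (m b d))) + (m a (m c (m b d)) - m c (m a (m b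 d))) - (m c (m (m b d) a) - m (m c (m b d)) a - m c (m a (m b d)) + m (m c a) (m b d)) - (m b (m d (m c a)) - m d (m b (m c a))) + (m c (m a (m b d) - m b (m a d))) + (m (m a (m b d) - m b (m a d)) c) + (m d (m (m c a) b) - m (m d (m c a)) b - m d (m b (m c a)) + m (m d b) (m c a)) + (m (m c a) (m d b) - m d (m (m c a) b)) - (m (m c b) (m a d) - m (m (m c b) a) d - m (m c b) (m d a) + m (m (m c b) d) a) - (m a (m (m c b) d) - m (m a (m c b)) d - m a (m d (m c b)) + m (m a d) (m c b)) - (m a (m (m c b) d) - m (m a (m c b)) d - m a (m d (m c b)) + m (m a d) (m c b)) + (m c (m b (m a d) - m (m b a) d - m b (m d a) + m (m b d) a)) + (m (m b (m a d) - m (m b a) d - m b (m d a) + m (m b d) a) c) - (m (m c b) (m a d) - m a (m (m c b) d)) - (m a (m d (m c b)) - m d (m a (m c b))) - (m a (m d (m c b)) - m d (m a (m c b))) - (m a (m d (m c b)) - m d (m a (m c b))) + (m d (m (m c b) a) - m (m d (m c b)) a - m d (m a (m c b)) + m (m d a) (m c b)) + (m (m c d) (m a b) - m (m (m c d) a) b - m (m c d) (m b a) + m (m (m c d) b) a) - (m a (m (m c d) b) - m (m a (m c d)) b - m a (m b (m c d)) + m (m a b) (m c d)) - (m (m c d) (m a b) - m a (m (m c d) b)) - (m (m c d) (m a b) - m a (m (m c d) b)) - (m b (m (m c d) a) - m (m b (m c d)) a - m b (m a (m c d)) + m (m b a) (m c d)) - (m b (m (m d a) c) - m (m b (m d a))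 c - m b (m c (m d a)) + m (m b c) (m d a)) + (m d (m a (m b c) - m (m a b) c - m a (m c b) + m (m a c) b)) + (m (m a (m b c) - m (m a b) c - m a (m c b) + m (m a c) b) d) - (m (m d a) (m b c) - m b (m (m d a) c)) - (m c (m (m d a) b) - m (m c (m d a)) b - m c (m b (m d a)) + m (m c b) (m d a)) - (m (m d a) (m c b) - m c (m (m d a) b))"
    unfolding anticomm_def comm_def assoc_plus_def
    by (simp add: la ra ls rs l0 r0 ln rn algebra_simps)
  also have "\<dots> = 0" by (simp only: L0 R0 l0 r0) simp
  finally show ?thesis by simp
qed

end
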